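(* Let $\alpha>0$ and let $m_\alpha(a,b)$ be a polynomial in two variables satisfying $|m_\alpha(a,b)-\max(a,b)|\le 2^{-\alpha}$ for all $a,b\in[0,1]$. For $n\in\mathbb{N}$ define polynomials $M_{\alpha,n}(x_1,\dots,x_n)$ recursively by $M_{\alpha,1}(x_1)=x_1$, $$M_{\alpha,2k}(x_1,\dots,x_{2k})=m_\alpha\big(M_{\alpha,k}(x_1,\dots,x_k),\,M_{\alpha,k}(x_{k+1},\dots,x_{2k})\big),$$ $$M_{\alpha,2k+1}(x_1,\dots,x_{2k+1})=m_\alpha\big(M_{\alpha,k}(x_1,\dots,x_k),\,M_{\alpha,k+1}(x_{k+1},\dots,x_{2k+1})\big)$$ for $k\ge1$. Then for every $n\in\mathbb{N}$, $$|M_{\alpha,n}(x_1,\dots,x_n)-\max(x_1,\dots,x_n)|\le 2^{-\alpha}\lceil\log_2 n\rceil$$ for all $x_1,\dots,x_n\in\big[(\lceil\log_2 n\rceil-1)2^{-\alpha},\,1-(\lceil\log_2 n\rceil-1)2^{-\alpha}\big]$. *)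

theory Defs
  imports Complex_Main
begin

definition is_poly2 :: "(real \<Rightarrow> real \<Rightarrow> real) \<Rightarrow> bool" where
  "is_poly2 m \<longleftrightarrow> (\<exists>(c :: nat \<Rightarrow> nat \<Rightarrow> real) (N :: nat).
      m = (\<lambda>a b. \<Sum>i\<le>N. \<Sum>j\<le>N. c i j * a ^ i * b ^ j))"

text \<open>M m n x = M_{alpha,n}(x_0, ..., x_{n-1}) (0-indexed arguments).
  The value for n = 0 is junk (never used).\<close>
function Mrec :: "(real \<Rightarrow> real \<Rightarrow> real) \<Rightarrow> nat \<Rightarrow> (nat \<Rightarrow> real) \<Rightarrow> real" where
  "Mrec m n x = (if n \<le> 1 then x 0
     else m (Mrec m (n div 2) x) (Mrec m (n - n div 2) (\<lambda>i. x (i + n div 2))))"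
  by pat_completeness auto
termination by (relation "measure (\<lambda>(m, n, x). n)") auto

end

theory Submission
  imports Defs
begin

declare Mrec.simps[simp del]

definition LL :: "nat \<Rightarrow> int" where "LL n = \<lceil>log 2 (real n)\<rceil>"

lemma LL_nonneg: "n \<ge> 1 \<Longrightarrow> LL n \<ge> 0"
proof -
  assume "n \<ge> 1"
  hence "log 2 (real n) \<ge> 0" by simp
  thus ?thesis unfolding LL_def by simp
qed

lemma LL_pow: assumes "n \<ge> 1" shows "n \<le> 2 ^ nat (LL n)"
proof -
  have "log 2 (real n) \<le> of_int (LL n)" unfolding LL_def by simp
  hence "real n \<le> 2 powr of_int (LL n)" using assms by (simp add: log_le_iff)
  also have "\<dots> = 2 powr real (nat (LL n))" using LL_nonneg[OF assms] by simp
  also have "\<dots> = 2 ^ nat (LL n)" by (simp add: powr_realpow)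
  finally have "real n \<le> real (2 ^ nat (LL n))" by simp
  thus ?thesis by linarith
qed

lemma LL_half: assumes "n \<ge> 2" "s \<ge> 1" "2 * s \<le> n + 1" shows "LL s \<le> LL n - 1"
proof -
  define K where "K = nat (LL n)"
  have nK: "n \<le> 2 ^ K" using LL_pow[of n] assms K_def by simp
  have K1: "K \<ge> 1"
  proof (rule ccontr)
    assume "\<not> K \<ge> 1" hence "K = 0" by simp
    thus False using nK assms by simp
  qed
  have "(2::nat) ^ K = 2 * 2 ^ (K - 1)" using K1 by (metis Suc_diff_1 less_le_trans power_Suc zero_less_one)
  hence sK: "s \<le> 2 ^ (K - 1)" using nK assms by linarith
  have "log 2 (real s) \<le> log 2 (real ((2::nat) ^ (K - 1)))"
    using sK assms by (subst log_le_cancel_iff) (auto simp del: of_nat_power)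
  also have "\<dots> = real (K - 1)" by (simp add: log_nat_power)
  finally have "log 2 (real s) \<le> of_int (LL n - 1)" using K1 K_def LL_nonneg[of n] assms by simp
  hence "\<lceil>log 2 (real s)\<rceil> \<le> LL n - 1" by (simp only: ceiling_le_iff)
  thus ?thesis unfolding LL_def .
qed

lemma main:
  fixes e :: real and m :: "real \<Rightarrow> real \<Rightarrow> real"
  assumes e: "e > 0"
    and mm: "\<forall>a\<in>{0..1}. \<forall>b\<in>{0..1}. \<bar>m a b - max a b\<bar> \<le> e"
  shows "n \<ge> 1 \<Longrightarrow> \<forall>i<n. x i \<in> {(of_int (LL n) - 1) * e .. 1 - (of_int (LL n) - 1) * e}
     \<Longrightarrow> \<bar>Mrec m n x - Max (x ` {0..<n})\<bar> \<le> e * of_int (LL n)"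
proof (induction n arbitrary: x rule: less_induct)
  case (less n)
  show ?case
  proof (cases "n \<le> 1")
    case True
    hence "n = 1" using less.prems by simp
    thus ?thesis by (subst Mrec.simps) (simp add: LL_def)
  next
    case False
    define k where "k = n div 2"
    define y where "y = (\<lambda>i. x (i + k))"
    have k1: "k \<ge> 1" "k < n" "n - k \<ge> 1" "n - k < n" using False k_def by auto
    have L1: "LL k \<le> LL n - 1" by (rule LL_half) (use False k_def in auto)
    have L2: "LL (n - k) \<le> LL n - 1" by (rule LL_half) (use False k_def in auto)
    have L0: "LL k \<ge> 0" "LL (n-k) \<ge> 0" using k1 LL_nonneg by auto
    have eL1: "(of_int (LL k) - 1) * e \<le> (of_int (LL n) - 1) * e"
      using L1 e by (intro mult_right_mono) auto
    have eL2: "(of_int (LL (n-k)) - 1) * e \<le> (of_int (LL n) - 1) * e"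
      using L2 e by (intro mult_right_mono) auto
    have fL1: "e * of_int (LL k) \<le> (of_int (LL n) - 1) * e"
      using L1 e by (simp add: mult.commute mult_right_mono)
    have fL2: "e * of_int (LL (n-k)) \<le> (of_int (LL n) - 1) * e"
      using L2 e by (simp add: mult.commute mult_right_mono)
    have IH1: "\<bar>Mrec m k x - Max (x ` {0..<k})\<bar> \<le> e * of_int (LL k)"
    proof (rule less.IH[of k x])
      show "\<forall>i<k. x i \<in> {(of_int (LL k) - 1) * e .. 1 - (of_int (LL k) - 1) * e}"
      proof (intro allI impI)
        fix i assume "i < k"
        hence "x i \<in> {(of_int (LL n) - 1) * e .. 1 - (of_int (LL n) - 1) * e}" using less.prems(2) k1 by auto
        thus "x i \<in> {(of_int (LL k) - 1) * e .. 1 - (of_int (LL k) - 1) * e}" using eL1 by auto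
      qed
    qed (use k1 in auto)
    have IH2: "\<bar>Mrec m (n-k) y - Max (y ` {0..<n-k})\<bar> \<le> e * of_int (LL (n-k))"
    proof (rule less.IH[of "n-k" y])
      show "\<forall>i<n-k. y i \<in> {(of_int (LL (n-k)) - 1) * e .. 1 - (of_int (LL (n-k)) - 1) * e}"
      proof (intro allI impI)
        fix i assume "i < n-k"
        hence "y i \<in> {(of_int (LL n) - 1) * e .. 1 - (of_int (LL n) - 1) * e}" using less.prems(2) k1 unfolding y_def by auto
        thus "y i \<in> {(of_int (LL (n-k)) - 1) * e .. 1 - (of_int (LL (n-k)) - 1) * e}" using eL2 by auto
      qed
    qed (use k1 in auto)
    define A where "A = Max (x ` {0..<k})"
    define B where "B = Max (y ` {0..<n-k})"
    have Aex: "\<exists>i<k. A = x i"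
    proof -
      have "A \<in> x ` {0..<k}" unfolding A_def using k1 by (intro Max_in) auto
      thus ?thesis by auto
    qed
    have Bex: "\<exists>i<n-k. B = y i"
    proof -
      have "B \<in> y ` {0..<n-k}" unfolding B_def using k1 by (intro Max_in) auto
      thus ?thesis by auto
    qed
    have Ar: "A \<in> {(of_int (LL n) - 1) * e .. 1 - (of_int (LL n) - 1) * e}"
      using Aex less.prems(2) k1 by auto
    have Br: "B \<in> {(of_int (LL n) - 1) * e .. 1 - (of_int (LL n) - 1) * e}"
      using Bex less.prems(2) k1 unfolding y_def by auto
    have img: "x ` {0..<n} = x ` {0..<k} \<union> y ` {0..<n-k}"
    proof -
      have "{0..<n} = {0..<k} \<union> (\<lambda>i. i + k) ` {0..<n-k}"
        using k1 by (auto simp: image_iff intro!: exI[of _ "_ - k"])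
      hence "x ` {0..<n} = x ` {0..<k} \<union> x ` ((\<lambda>i. i + k) ` {0..<n-k})" by (metis image_Un)
      moreover have "x ` ((\<lambda>i. i + k) ` {0..<n-k}) = y ` {0..<n-k}" unfolding y_def by (rule image_image)
      ultimately show ?thesis by simp
    qed
    have MX: "Max (x ` {0..<n}) = max A B"
      unfolding img A_def B_def using k1 by (subst Max_Un) auto
    define a where "a = Mrec m k x"
    define b where "b = Mrec m (n-k) y"
    have ha: "\<bar>a - A\<bar> \<le> (of_int (LL n) - 1) * e" using IH1 fL1 a_def A_def by linarith
    have hb: "\<bar>b - B\<bar> \<le> (of_int (LL n) - 1) * e" using IH2 fL2 b_def B_def by linarith
    have a01: "a \<in> {0..1}" using ha Ar by auto
    have b01: "b \<in> {0..1}" using hb Br by auto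
    have mab: "\<bar>m a b - max a b\<bar> \<le> e" using mm a01 b01 by blast
    have mx: "\<bar>max a b - max A B\<bar> \<le> (of_int (LL n) - 1) * e" using ha hb by (auto simp: max_def)
    have "Mrec m n x = m a b"
      using False unfolding a_def b_def y_def k_def by (subst Mrec.simps) (simp add: False)
    hence "\<bar>Mrec m n x - Max (x ` {0..<n})\<bar> \<le> e + (of_int (LL n) - 1) * e"
      using MX mab mx by linarith
    thus ?thesis by (simp add: algebra_simps)
  qed
qed

theorem theorem2:
  fixes \<alpha> :: real and m :: "real \<Rightarrow> real \<Rightarrow> real" and n :: nat and x :: "nat \<Rightarrow> real"
  assumes "\<alpha> > 0"
    and "is_poly2 m"
    and "\<forall>a\<in>{0..1}. \<forall>b\<in>{0..1}. \<bar>m a b - max a b\<bar> \<le> 2 powr (-\<alpha>)"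
    and "n \<ge> 1"
    and "\<forall>i<n. x i \<in> {(of_int \<lceil>log 2 (real n)\<rceil> - 1) * 2 powr (-\<alpha>) ..
                         1 - (of_int \<lceil>log 2 (real n)\<rceil> - 1) * 2 powr (-\<alpha>)}"
  shows "\<bar>Mrec m n x - Max (x ` {0..<n})\<bar> \<le> 2 powr (-\<alpha>) * of_int \<lceil>log 2 (real n)\<rceil>"
  using main[of "2 powr (-\<alpha>)" m n x] assms unfolding LL_def by simp

end
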